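(* Let $u$ be the solution of the time-fractional problem described in the context, let $\widehat u$ be its implicit piecewise-linear interpolant, $\psi=u-\widehat u$ and $\psi^n=\psi(t_n)$. Then for $1\le n\le N$, \[ \psi^n=\sum_{j=1}^n(-1)^{n+j+1}\Delta_j,\qquad \Delta_j=\frac{2}{\tau_j}\int_{I_j}(u-u_I)\,dt=-\frac{1}{\tau_j}\int_{I_j}(t_j-t)(t-t_{j-1})u''(t)\,dt. \]
   Context: $\Omega\subset\mathbb{R}^d$ ($d\le3$) convex polyhedron, $0<\alpha<1$, $\kappa\in W^{1,\infty}(\Omega)$, $\kappa\ge\kappa_{\min}>0$, $\mathcal{A}w=-\nabla\cdot(\kappa\nabla w)$; $u$ solves $\partial_t^\alpha u+\mathcal{A}u=f$ on $\Omega\times(0,T]$ with $u=0$ on $\partial\Omega$, $u(0)=u_0$, where $\partial_t^\alpha v(t)=\int_0^t\frac{(t-s)^{-\alpha}}{\Gamma(1-\alpha)}v'(s)\,ds$. Time mesh $t_n=(n\tau)^\gamma$, $0\le n\le N$, $\tau=T^{1/\gamma}/N$, $\gamma\ge1$, $\tau_n=t_n-t_{n-1}$, $I_n=(t_{n-1},t_n)$. The implicit interpolant $\widehat u$ is the continuous function on $[0,T]$, linear on each $\overline{I_n}$, with $\widehat u(0)=u_0$ and $\int_{I_n}\widehat u\,dt=\int_{I_n}u\,dt$ for $1\le n\le N$. $u_I$ is the usual continuous piecewise-linear interpolant: $u_I(t)=\frac{t_n-t}{\tau_n}u(t_{n-1})+\frac{t-t_{n-1}}{\tau_n}u(t_n)$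 for $t\in I_n$. *)

theory Defs
  imports "HOL-Analysis.Analysis"
begin

definition mesh_tau :: "real \<Rightarrow> real \<Rightarrow> nat \<Rightarrow> real" where
  "mesh_tau T \<gamma> N = T powr (1 / \<gamma>) / real N"

definition tmesh :: "real \<Rightarrow> real \<Rightarrow> nat \<Rightarrow> nat \<Rightarrow> real" where
  "tmesh T \<gamma> N n = (real n * mesh_tau T \<gamma> N) powr \<gamma>"

definition tstep :: "real \<Rightarrow> real \<Rightarrow> nat \<Rightarrow> nat \<Rightarrow> real" where
  "tstep T \<gamma> N n = tmesh T \<gamma> N n - tmesh T \<gamma> N (n - 1)"

definition lin_interp ::
  "real \<Rightarrow> real \<Rightarrow> nat \<Rightarrow> (real \<Rightarrow> 'a::real_normed_vector) \<Rightarrow> nat \<Rightarrow> real \<Rightarrow> 'a" where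
  "lin_interp T \<gamma> N u n t =
     ((tmesh T \<gamma> N n - t) / tstep T \<gamma> N n) *\<^sub>R u (tmesh T \<gamma> N (n - 1))
   + ((t - tmesh T \<gamma> N (n - 1)) / tstep T \<gamma> N n) *\<^sub>R u (tmesh T \<gamma> N n)"

definition is_implicit_interp ::
  "real \<Rightarrow> real \<Rightarrow> nat \<Rightarrow> (real \<Rightarrow> 'a::banach) \<Rightarrow> (real \<Rightarrow> 'a) \<Rightarrow> bool" where
  "is_implicit_interp T \<gamma> N u uh \<longleftrightarrow>
     continuous_on {0..T} uh \<and>
     uh 0 = u 0 \<and>
     (\<forall>n\<in>{1..N}. \<forall>t\<in>{tmesh T \<gamma> N (n - 1)..tmesh T \<gamma> N n}.
        uh t = lin_interp T \<gamma> N uh n t) \<and>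
     (\<forall>n\<in>{1..N}. integral {tmesh T \<gamma> N (n - 1)..tmesh T \<gamma> N n} uh
                 = integral {tmesh T \<gamma> N (n - 1)..tmesh T \<gamma> N n} u)"

definition Delta ::
  "real \<Rightarrow> real \<Rightarrow> nat \<Rightarrow> (real \<Rightarrow> 'a::real_normed_vector) \<Rightarrow> nat \<Rightarrow> 'a" where
  "Delta T \<gamma> N u j = (2 / tstep T \<gamma> N j) *\<^sub>R
     integral {tmesh T \<gamma> N (j - 1)..tmesh T \<gamma> N j} (\<lambda>t. u t - lin_interp T \<gamma> N u j t)"

end

theory Submission
  imports Defs
begin

lemma mesh_facts:
  assumes T: "T > 0" and gam: "\<gamma> \<ge> 1" and N: "N \<ge> 1"
  shows "tmesh T \<gamma> N 0 = 0"
    and "\<And>k l. k < l \<Longrightarrow> tmesh T \<gamma> N k < tmesh T \<gamma> N l"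
    and "tmesh T \<gamma> N N = T"
    and "\<And>k. 0 \<le> tmesh T \<gamma> N k"
proof -
  have tau: "mesh_tau T \<gamma> N > 0" using T N by (simp add: mesh_tau_def)
  show "tmesh T \<gamma> N 0 = 0" by (simp add: tmesh_def)
  show "\<And>k l. k < l \<Longrightarrow> tmesh T \<gamma> N k < tmesh T \<gamma> N l"
    unfolding tmesh_def using tau gam
    by (intro powr_less_mono2) (auto intro: mult_strict_right_mono)
  show "\<And>k. 0 \<le> tmesh T \<gamma> N k" by (simp add: tmesh_def)
  have "tmesh T \<gamma> N N = (T powr (1/\<gamma>)) powr \<gamma>"
    using N by (simp add: tmesh_def mesh_tau_def)
  also have "\<dots> = T" using T gam by (simp add: powr_powr)
  finally show "tmesh T \<gamma> N N = T" .
qed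

lemma lin_interp_integral:
  fixes v :: "real \<Rightarrow> 'a::banach"
  assumes lt: "tmesh T \<gamma> N (j-1) < tmesh T \<gamma> N j"
  shows "(lin_interp T \<gamma> N v j has_integral
           (tstep T \<gamma> N j / 2) *\<^sub>R (v (tmesh T \<gamma> N (j-1)) + v (tmesh T \<gamma> N j)))
          {tmesh T \<gamma> N (j-1)..tmesh T \<gamma> N j}"
proof -
  define a where "a = tmesh T \<gamma> N (j-1)"
  define b where "b = tmesh T \<gamma> N j"
  have ab: "a < b" using lt by (simp add: a_def b_def)
  have st: "tstep T \<gamma> N j = b - a" by (simp add: tstep_def a_def b_def)
  define F where "F t = (- ((b-t)*(b-t))/(2*(b-a))) *\<^sub>R v a + (((t-a)*(t-a))/(2*(b-a))) *\<^sub>R v b" for t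
  have li: "lin_interp T \<gamma> N v j t = ((b - t)/(b-a)) *\<^sub>R v a + ((t-a)/(b-a)) *\<^sub>R v b" for t
    by (simp add: lin_interp_def st a_def b_def)
  have "(lin_interp T \<gamma> N v j has_integral (F b - F a)) {a..b}"
  proof (rule fundamental_theorem_of_calculus)
    show "a \<le> b" using ab by simp
    fix x assume "x \<in> {a..b}"
    have nz: "2*(b-a)*(2*(b-a)) \<noteq> 0" "b - a \<noteq> 0" using ab by auto
    have d1: "((\<lambda>t. - ((b-t)*(b-t))/(2*(b-a))) has_real_derivative (b-x)/(b-a)) (at x)"
      apply (rule derivative_eq_intros refl)+
      apply (use nz in simp)
      apply (subst frac_eq_eq[OF nz]) by algebra
    have d2: "((\<lambda>t. ((t-a)*(t-a))/(2*(b-a))) has_real_derivative (x-a)/(b-a)) (at x)"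
      apply (rule derivative_eq_intros refl)+
      apply (use nz in simp)
      apply (subst frac_eq_eq[OF nz]) by algebra
    have "(F has_vector_derivative lin_interp T \<gamma> N v j x) (at x)"
      unfolding F_def li
      using has_vector_derivative_add[OF has_vector_derivative_scaleR[OF d1 has_vector_derivative_const[of "v a"]]
         has_vector_derivative_scaleR[OF d2 has_vector_derivative_const[of "v b"]]]
      by simp
    then show "(F has_vector_derivative lin_interp T \<gamma> N v j x) (at x within {a..b})"
      by (rule has_vector_derivative_at_within)
  qed
  moreover have "F b - F a = ((b-a)/2) *\<^sub>R (v a + v b)"
  proof -
    have e: "(b-a)*(b-a)/(2*b-2*a) = (b-a)/2" using ab by (simp add: field_simps)
    show ?thesis using ab by (simp add: F_def e scaleR_add_right)
  qed
  ultimately show ?thesis by (simp add: st a_def b_def)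
qed

lemma uprime_left0:
  fixes u' u'' :: "real \<Rightarrow> 'a::banach"
  assumes T: "T > 0" and alpha: "0 < \<alpha>" "\<alpha> < 1" and C: "C \<ge> 0"
    and d2: "\<And>t. t \<in> {0<..<T} \<Longrightarrow> (u' has_vector_derivative u'' t) (at t)"
    and reg: "\<And>t. t \<in> {0<..<T} \<Longrightarrow> norm (u'' t) \<le> C * t powr (\<alpha> - 2)"
  shows "((\<lambda>t. t *\<^sub>R u' t) \<longlongrightarrow> 0) (at_right 0)"
proof -
  define s where "s = T/2"
  have s: "0 < s" "s < T" using T by (auto simp: s_def)
  define D where "D = C/(1-\<alpha>)"
  have D: "D \<ge> 0" using C alpha by (simp add: D_def)
  define \<phi> where "\<phi> r = - D * r powr (\<alpha> - 1)" for r
  have bnd: "norm (u' t) \<le> norm (u' s) + D * t powr (\<alpha> - 1)" if t: "0 < t" "t < s" for t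
  proof -
    have contu: "continuous_on {t..s} u'"
      using t s by (intro continuous_at_imp_continuous_on ballI has_vector_derivative_continuous[OF d2]) auto
    have contphi: "continuous_on {t..s} \<phi>"
      using t unfolding \<phi>_def by (intro continuous_intros) auto
    have dphi: "(\<phi> has_vector_derivative C * x powr (\<alpha> - 2)) (at x)" if "t < x" for x
    proof -
      have "(\<phi> has_real_derivative - D * ((\<alpha> - 1) * x powr (\<alpha> - 1 - 1))) (at x)"
        unfolding \<phi>_def using that t by (auto intro!: derivative_eq_intros)
      moreover have "- D * ((\<alpha> - 1) * x powr (\<alpha> - 1 - 1)) = C * x powr (\<alpha> - 2)"
        using alpha by (simp add: D_def field_simps)
      ultimately show ?thesis by (simp add: has_real_derivative_iff_has_vector_derivative)
    qed
    have "norm (u' s - u' t) \<le> \<phi> s - \<phi> t"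
      using t s
      by (intro differentiable_bound_general[OF _ contu contphi, of u'' "\<lambda>x. C * x powr (\<alpha> - 2)"])
         (auto intro!: d2 dphi reg)
    also have "\<phi> s - \<phi> t \<le> D * t powr (\<alpha> - 1)"
      using D by (simp add: \<phi>_def)
    finally show ?thesis using norm_triangle_ineq2[of "u' t" "u' s"] by (simp add: norm_minus_commute)
  qed
  show ?thesis
  proof (rule Lim_null_comparison)
    show "\<forall>\<^sub>F t in at_right 0. norm (t *\<^sub>R u' t) \<le> t * norm (u' s) + D * t powr \<alpha>"
      unfolding eventually_at_right_field
    proof (intro exI[of _ s] conjI allI impI)
      fix t :: real assume t: "0 < t" "t < s"
      have "norm (t *\<^sub>R u' t) = t * norm (u' t)" using t by simp
      also have "\<dots> \<le> t * (norm (u' s) + D * t powr (\<alpha> - 1))"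
        using bnd[OF t] t by (intro mult_left_mono) auto
      also have "\<dots> = t * norm (u' s) + D * (t * t powr (\<alpha> - 1))" by (simp add: algebra_simps)
      also have "t * t powr (\<alpha> - 1) = t powr \<alpha>" using t by (simp add: powr_mult_base)
      finally show "norm (t *\<^sub>R u' t) \<le> t * norm (u' s) + D * t powr \<alpha>" .
    qed (use s in auto)
    have "((\<lambda>t. t powr \<alpha>) \<longlongrightarrow> 0) (at_right 0)"
      using alpha by (intro tendsto_zero_powrI) (auto intro: tendsto_ident_at eventually_at_rightI[of 0 1])
    then have "((\<lambda>t. t * norm (u' s) + D * t powr \<alpha>) \<longlongrightarrow> 0 * norm (u' s) + D * 0) (at_right 0)"
      by (intro tendsto_intros tendsto_ident_at)
    then show "((\<lambda>t. t * norm (u' s) + D * t powr \<alpha>) \<longlongrightarrow> 0) (at_right 0)" by simp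
  qed
qed

lemma uprime_rightT:
  fixes u' u'' :: "real \<Rightarrow> 'a::banach"
  assumes T: "T > 0" and alpha: "0 < \<alpha>" "\<alpha> < 1" and C: "C \<ge> 0"
    and d2: "\<And>t. t \<in> {0<..<T} \<Longrightarrow> (u' has_vector_derivative u'' t) (at t)"
    and reg: "\<And>t. t \<in> {0<..<T} \<Longrightarrow> norm (u'' t) \<le> C * t powr (\<alpha> - 2)"
  shows "((\<lambda>t. (T - t) *\<^sub>R u' t) \<longlongrightarrow> 0) (at_left T)"
proof -
  define s where "s = T/2"
  have s: "0 < s" "s < T" using T by (auto simp: s_def)
  define M where "M = C * s powr (\<alpha> - 2)"
  have bnd: "norm (u' t) \<le> norm (u' s) + M * T" if t: "s < t" "t < T" for t
  proof -
    have contu: "continuous_on {s..t} u'"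
      using t s by (intro continuous_at_imp_continuous_on ballI has_vector_derivative_continuous[OF d2]) auto
    have "norm (u' t - u' s) \<le> M * t - M * s"
    proof (rule differentiable_bound_general[OF _ contu _, of "\<lambda>x. M * x" u'' "\<lambda>x. M"])
      show "s < t" using t by simp
      show "continuous_on {s..t} ((*) M)" by (intro continuous_intros)
      fix x assume x: "s < x" "x < t"
      show "(u' has_vector_derivative u'' x) (at x)" using x s t by (intro d2) auto
      show "((*) M has_vector_derivative M) (at x)"
        using has_real_derivative_iff_has_vector_derivative[THEN iffD1, OF DERIV_cmult_Id[of M x]] by simp
      have "norm (u'' x) \<le> C * x powr (\<alpha> - 2)" using x s t by (intro reg) auto
      also have "\<dots> \<le> M" unfolding M_def using C alpha x s
        by (intro mult_left_mono powr_mono2') auto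
      finally show "norm (u'' x) \<le> M" .
    qed
    also have "M * t - M * s \<le> M * T"
      using t s C by (simp add: M_def right_diff_distrib[symmetric] mult_left_mono)
    finally show ?thesis using norm_triangle_ineq2[of "u' t" "u' s"] by simp
  qed
  show ?thesis
  proof (rule Lim_null_comparison)
    show "\<forall>\<^sub>F t in at_left T. norm ((T - t) *\<^sub>R u' t) \<le> (T - t) * (norm (u' s) + M * T)"
      unfolding eventually_at_left_field
    proof (intro exI[of _ s] conjI allI impI)
      fix t :: real assume t: "s < t" "t < T"
      show "norm ((T - t) *\<^sub>R u' t) \<le> (T - t) * (norm (u' s) + M * T)"
        using bnd[OF t] t by (simp add: mult_left_mono)
    qed (use s in auto)
    have "((\<lambda>t. (T - t) * (norm (u' s) + M * T)) \<longlongrightarrow> (T - T) * (norm (u' s) + M * T)) (at_left T)"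
      by (intro tendsto_intros tendsto_ident_at)
    then show "((\<lambda>t. (T - t) * (norm (u' s) + M * T)) \<longlongrightarrow> 0) (at_left T)" by simp
  qed
qed

lemma interval_identity:
  fixes u u' u'' :: "real \<Rightarrow> 'a::banach"
  assumes ab: "0 \<le> a" "a < b" "b \<le> T"
    and T: "T > 0" and alpha: "0 < \<alpha>" "\<alpha> < 1" and C: "C \<ge> 0"
    and cont: "continuous_on {0..T} u"
    and d1: "\<And>t. t \<in> {0<..<T} \<Longrightarrow> (u has_vector_derivative u' t) (at t)"
    and d2: "\<And>t. t \<in> {0<..<T} \<Longrightarrow> (u' has_vector_derivative u'' t) (at t)"
    and reg: "\<And>t. t \<in> {0<..<T} \<Longrightarrow> norm (u'' t) \<le> C * t powr (\<alpha> - 2)"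
  shows "((\<lambda>t. ((b - t) * (t - a)) *\<^sub>R u'' t) has_integral
           ((b - a) *\<^sub>R (u a + u b) - 2 *\<^sub>R integral {a..b} u)) {a..b}"
proof -
  define W where "W t = ((b - t) * (t - a)) *\<^sub>R u' t" for t
  define G where "G t = W t - (a + b - 2 * t) *\<^sub>R u t - 2 *\<^sub>R integral {a..t} u" for t
  have contab: "continuous_on {a..b} u" using ab by (intro continuous_on_subset[OF cont]) auto
  have u'cont: "continuous (at x) u'" if "0 < x" "x < T" for x
    using that by (intro has_vector_derivative_continuous[OF d2]) auto
  have Wcont: "continuous (at x within {a..b}) W" if x: "x \<in> {a..b}" for x
  proof -
    consider "x = a" | "x = b" | "a < x" "x < b" using x by force
    then show ?thesis
    proof cases
      case 3
      then show ?thesis unfolding W_def using ab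
        by (intro continuous_at_imp_continuous_within[where s="{a..b}"]; intro continuous_intros u'cont) auto
    next
      case 1
      show ?thesis
      proof (cases "a = 0")
        case False
        then show ?thesis unfolding W_def using ab 1
          by (intro continuous_at_imp_continuous_within[where s="{a..b}"]; intro continuous_intros u'cont) auto
      next
        case True
        have "((\<lambda>t. (b - t) *\<^sub>R (t *\<^sub>R u' t)) \<longlongrightarrow> (b - 0) *\<^sub>R 0) (at_right 0)"
          by (intro tendsto_intros uprime_left0[OF T alpha C d2 reg] tendsto_ident_at)
        then have "(W \<longlongrightarrow> W a) (at_right a)"
          unfolding W_def using True by (simp add: algebra_simps)
        then show ?thesis unfolding continuous_within 1 at_within_Icc_at_right[OF ab(2)] .
      qed
    next
      case 2
      show ?thesis
      proof (cases "b = T")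
        case False
        then show ?thesis unfolding W_def using ab 2
          by (intro continuous_at_imp_continuous_within[where s="{a..b}"]; intro continuous_intros u'cont) auto
      next
        case True
        have "((\<lambda>t. (t - a) *\<^sub>R ((T - t) *\<^sub>R u' t)) \<longlongrightarrow> (T - a) *\<^sub>R 0) (at_left T)"
          by (intro tendsto_intros uprime_rightT[OF T alpha C d2 reg] tendsto_ident_at)
        then have "(W \<longlongrightarrow> W b) (at_left b)"
          unfolding W_def using True by (simp add: algebra_simps)
        then show ?thesis unfolding continuous_within 2 at_within_Icc_at_left[OF ab(2)] .
      qed
    qed
  qed
  have intcont: "continuous_on {a..b} (\<lambda>t. integral {a..t} u)"
    unfolding continuous_on_eq_continuous_within
    using has_vector_derivative_continuous[OF integral_has_vector_derivative[OF contab]] by blast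
  have Gcont: "continuous_on {a..b} G"
    unfolding G_def
    apply (intro continuous_on_diff continuous_on_scaleR intcont contab continuous_on_const continuous_intros)
    using Wcont unfolding continuous_on_eq_continuous_within by blast
  have Gder: "(G has_vector_derivative ((b - x) * (x - a)) *\<^sub>R u'' x) (at x)" if x: "x \<in> {a<..<b}" for x
  proof -
    have x0: "x \<in> {0<..<T}" using x ab by auto
    have dw: "((\<lambda>t. (b - t) * (t - a)) has_real_derivative (a + b - 2 * x)) (at x)"
      by (rule derivative_eq_intros refl)+ (simp add: algebra_simps)
    have dl: "((\<lambda>t. a + b - 2 * t) has_real_derivative (- 2)) (at x)"
      by (rule derivative_eq_intros refl)+ simp
    have di: "((\<lambda>t. integral {a..t} u) has_vector_derivative u x) (at x)"
      using integral_has_vector_derivative[OF contab, of x] x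
      by (simp add: at_within_Icc_at)
    have di2: "((\<lambda>t. 2 *\<^sub>R integral {a..t} u) has_vector_derivative 2 *\<^sub>R u x) (at x)"
      using has_vector_derivative_scaleR[OF DERIV_const di] by simp
    have "(G has_vector_derivative
        (((b - x) * (x - a)) *\<^sub>R u'' x + (a + b - 2 * x) *\<^sub>R u' x)
        - ((a + b - 2 * x) *\<^sub>R u' x + (- 2) *\<^sub>R u x) - 2 *\<^sub>R u x) (at x)"
      unfolding G_def W_def
      by (intro has_vector_derivative_diff has_vector_derivative_scaleR dw dl d1 d2 x0 di2
          has_vector_derivative_const)
    then show ?thesis
      by (rule has_vector_derivative_eq_rhs) (simp add: algebra_simps)
  qed
  have "((\<lambda>t. ((b - t) * (t - a)) *\<^sub>R u'' t) has_integral (G b - G a)) {a..b}"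
    using ab by (intro fundamental_theorem_of_calculus_interior Gcont Gder) auto
  moreover have "G b - G a = (b - a) *\<^sub>R (u a + u b) - 2 *\<^sub>R integral {a..b} u"
    by (simp add: G_def W_def algebra_simps)
  ultimately show ?thesis by simp
qed

lemma alg1:
  fixes I S :: "'a::real_vector"
  assumes "\<tau> \<noteq> 0"
  shows "(2/\<tau>) *\<^sub>R (I - (\<tau>/2) *\<^sub>R S) = - (1/\<tau>) *\<^sub>R (\<tau> *\<^sub>R S - 2 *\<^sub>R I)"
  using assms by (simp add: scaleR_diff_right scaleR_scaleR)

lemma alg2:
  fixes A B :: "'a::real_vector"
  assumes "\<tau> \<noteq> 0"
  shows "(2/\<tau>) *\<^sub>R ((\<tau>/2) *\<^sub>R A - (\<tau>/2) *\<^sub>R B) = A - B"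
  using assms by (simp add: scaleR_diff_right scaleR_scaleR)

theorem lemma3p1:
  fixes u u' u'' uh :: "real \<Rightarrow> 'a::banach"
    and T \<gamma> \<alpha> C :: real and N n :: nat
  assumes T: "T > 0" and gam: "\<gamma> \<ge> 1" and N: "N \<ge> 1"
    and alpha: "0 < \<alpha>" "\<alpha> < 1"
    and cont: "continuous_on {0..T} u"
    and d1: "\<And>t. t \<in> {0<..<T} \<Longrightarrow> (u has_vector_derivative u' t) (at t)"
    and d2: "\<And>t. t \<in> {0<..<T} \<Longrightarrow> (u' has_vector_derivative u'' t) (at t)"
    and cont2: "continuous_on {0<..<T} u''"
    and reg: "\<And>t. t \<in> {0<..<T} \<Longrightarrow> norm (u'' t) \<le> C * t powr (\<alpha> - 2)"
    and uh: "is_implicit_interp T \<gamma> N u uh"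
    and n: "1 \<le> n" "n \<le> N"
  shows "u (tmesh T \<gamma> N n) - uh (tmesh T \<gamma> N n)
           = (\<Sum>j=1..n. (-1) ^ (n + j + 1) *\<^sub>R Delta T \<gamma> N u j)
       \<and> (\<forall>j\<in>{1..n}.
           (\<lambda>t. ((tmesh T \<gamma> N j - t) * (t - tmesh T \<gamma> N (j - 1))) *\<^sub>R u'' t)
              integrable_on {tmesh T \<gamma> N (j - 1)..tmesh T \<gamma> N j}
         \<and> Delta T \<gamma> N u j = - (1 / tstep T \<gamma> N j) *\<^sub>R
              integral {tmesh T \<gamma> N (j - 1)..tmesh T \<gamma> N j}
                (\<lambda>t. ((tmesh T \<gamma> N j - t) * (t - tmesh T \<gamma> N (j - 1))) *\<^sub>R u'' t))"
proof -
  define tm where "tm = tmesh T \<gamma> N"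
  note mf = mesh_facts[OF T gam N, folded tm_def]
  have C: "C \<ge> 0"
  proof -
    have "T/2 \<in> {0<..<T}" using T by simp
    then have "0 \<le> C * (T/2) powr (\<alpha> - 2)" using reg[of "T/2"] norm_ge_zero[of "u'' (T/2)"] by linarith
    moreover have "(T/2) powr (\<alpha> - 2) > 0" using T by simp
    ultimately show ?thesis by (simp add: zero_le_mult_iff)
  qed
  have ivl: "0 \<le> tm (j-1)" "tm (j-1) < tm j" "tm j \<le> T" if j: "j \<in> {1..N}" for j
  proof -
    show "0 \<le> tm (j-1)" by (rule mf(4))
    show "tm (j-1) < tm j" using j by (intro mf(2)) auto
    show "tm j \<le> T"
    proof (cases "j = N")
      case True then show ?thesis using mf(3) by simp
    next
      case False then have "tm j < tm N" using j by (intro mf(2)) auto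
      then show ?thesis using mf(3) by simp
    qed
  qed
  have st: "tstep T \<gamma> N j = tm j - tm (j-1)" for j by (simp add: tstep_def tm_def)
  have Dgen: "Delta T \<gamma> N u j = (2 / (tm j - tm (j-1))) *\<^sub>R
      (integral {tm (j-1)..tm j} u - ((tm j - tm (j-1)) / 2) *\<^sub>R (u (tm (j-1)) + u (tm j)))"
    if j: "j \<in> {1..N}" for j
  proof -
    have li: "(lin_interp T \<gamma> N u j has_integral
           (tstep T \<gamma> N j / 2) *\<^sub>R (u (tm (j-1)) + u (tm j))) {tm (j-1)..tm j}"
      using lin_interp_integral[of T \<gamma> N j u] ivl[OF j] by (simp add: tm_def)
    have ui: "u integrable_on {tm (j-1)..tm j}"
      using ivl[OF j] by (intro integrable_continuous_interval continuous_on_subset[OF cont]) auto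
    have "integral {tm (j-1)..tm j} (\<lambda>t. u t - lin_interp T \<gamma> N u j t)
        = integral {tm (j-1)..tm j} u - (tstep T \<gamma> N j / 2) *\<^sub>R (u (tm (j-1)) + u (tm j))"
      using integral_diff[OF ui has_integral_integrable[OF li]] integral_unique[OF li] by simp
    then show ?thesis by (simp add: Delta_def st tm_def)
  qed
  have part2: "(\<lambda>t. ((tm j - t) * (t - tm (j - 1))) *\<^sub>R u'' t) integrable_on {tm (j - 1)..tm j}
         \<and> Delta T \<gamma> N u j = - (1 / tstep T \<gamma> N j) *\<^sub>R
              integral {tm (j - 1)..tm j} (\<lambda>t. ((tm j - t) * (t - tm (j - 1))) *\<^sub>R u'' t)"
    if j: "j \<in> {1..N}" for j
  proof -
    note hi = interval_identity[OF ivl[OF j] T alpha C cont d1 d2 reg]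
    have ne: "tm j - tm (j-1) \<noteq> 0" using ivl[OF j] by simp
    show ?thesis
    proof
      show "(\<lambda>t. ((tm j - t) * (t - tm (j - 1))) *\<^sub>R u'' t) integrable_on {tm (j - 1)..tm j}"
        using hi by blast
      show "Delta T \<gamma> N u j = - (1 / tstep T \<gamma> N j) *\<^sub>R
              integral {tm (j - 1)..tm j} (\<lambda>t. ((tm j - t) * (t - tm (j - 1))) *\<^sub>R u'' t)"
      proof -
        have E: "integral {tm (j - 1)..tm j} (\<lambda>t. ((tm j - t) * (t - tm (j - 1))) *\<^sub>R u'' t)
           = (tm j - tm (j-1)) *\<^sub>R (u (tm (j-1)) + u (tm j)) - 2 *\<^sub>R integral {tm (j-1)..tm j} u"
          by (rule integral_unique[OF hi])
        show ?thesis unfolding Dgen[OF j] E st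
          using alg1[OF ne] by simp
      qed
    qed
  qed
  define \<psi> where "\<psi> k = u (tm k) - uh (tm k)" for k
  have Dpsi: "Delta T \<gamma> N u j = - (\<psi> (j-1) + \<psi> j)" if j: "j \<in> {1..N}" for j
  proof -
    have li: "(lin_interp T \<gamma> N uh j has_integral
           (tstep T \<gamma> N j / 2) *\<^sub>R (uh (tm (j-1)) + uh (tm j))) {tm (j-1)..tm j}"
      using lin_interp_integral[of T \<gamma> N j uh] ivl[OF j] by (simp add: tm_def)
    have "integral {tm (j-1)..tm j} u = integral {tm (j-1)..tm j} uh"
      using uh j unfolding is_implicit_interp_def tm_def by auto
    also have "\<dots> = integral {tm (j-1)..tm j} (lin_interp T \<gamma> N uh j)"
      using uh j unfolding is_implicit_interp_def tm_def by (intro integral_cong) auto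
    also have "\<dots> = (tstep T \<gamma> N j / 2) *\<^sub>R (uh (tm (j-1)) + uh (tm j))"
      by (rule integral_unique[OF li])
    finally have I: "integral {tm (j-1)..tm j} u = ((tm j - tm (j-1)) / 2) *\<^sub>R (uh (tm (j-1)) + uh (tm j))"
      by (simp add: st)
    have ne: "tm j - tm (j-1) \<noteq> 0" using ivl[OF j] by simp
    show ?thesis unfolding Dgen[OF j] I \<psi>_def alg2[OF ne]
      by (simp add: algebra_simps)
  qed
  have psi0: "\<psi> 0 = 0"
    using uh mf(1) unfolding \<psi>_def is_implicit_interp_def by simp
  have part1: "m \<le> N \<Longrightarrow> \<psi> m = (\<Sum>j=1..m. (-1) ^ (m + j + 1) *\<^sub>R Delta T \<gamma> N u j)" for m
  proof (induction m)
    case 0 then show ?case using psi0 by simp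
  next
    case (Suc m)
    have "\<psi> (Suc m) = - Delta T \<gamma> N u (Suc m) - \<psi> m"
    proof -
      have e: "Delta T \<gamma> N u (Suc m) = - (\<psi> m + \<psi> (Suc m))"
        using Dpsi[of "Suc m"] Suc.prems by simp
      show ?thesis unfolding e by simp
    qed
    also have "\<dots> = - Delta T \<gamma> N u (Suc m) - (\<Sum>j=1..m. (-1) ^ (m + j + 1) *\<^sub>R Delta T \<gamma> N u j)"
      using Suc by simp
    also have "\<dots> = (\<Sum>j=1..Suc m. (-1) ^ (Suc m + j + 1) *\<^sub>R Delta T \<gamma> N u j)"
      by (simp add: sum_negf[symmetric] algebra_simps)
    finally show ?case .
  qed
  show ?thesis
    using part1[OF n(2)] part2 n unfolding \<psi>_def tm_def by auto
qed

end
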